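(* Let $q_1(\bar x,\mathrm{cntd}(y))\,{:}{-}\,A_1\wedge C_1$ and $q_2(\bar x,\mathrm{cntd}(y))\,{:}{-}\,A_2\wedge C_2$ be count-distinct queries. If $\mathrm{core}(q_1)$ and $\mathrm{core}(q_2)$ are isomorphic (via a bijection fixing every variable of $\bar x$ and $y$), then $q_1$ and $q_2$ are equivalent.
   Context: Fix a dense linearly ordered domain $\Delta$ of constants. A database instance is a finite set of facts over $\Delta$. A conjunctive query with comparisons (CQC) $q(\bar u)\,{:}{-}\,A\wedge C$ has distinguished variables $\bar u$, a finite set $A$ of relational atoms over variables and constants, and a finite set $C$ of comparisons $s\,\rho\,t$, $\rho\in\{=,<,\le\}$. $C\models s\,\rho\,t$ means every assignment to $\Delta$ satisfying $C$ satisfies $s\,\rho\,t$. A homomorphism $q_1\to_{\bar u}q_2$ is a map $h$ from terms of $q_1$ to terms of $q_2$, identity on constants and on $\bar u$, with $h(A_1)\subseteq A_2$ and $C_2\models h(r)\,\rho\,h(s)$ for all $r\,\rho\,s\in C_1$; an isomorphism is a bijection on variables fixing $\bar u$ and constants with $h(A_1)=A_2$, $h(C_1)=C_2$. $\mathrm{ext}(q)$ replaces $C$ by $\{r\,\rho\,s: r,s\text{ terms of }q,\ C\models r\,\rho\,s\}$. A core of $q$ is a CQC $q'$ with (1) $q\to_{\bar u}q'$; (2) for every $q''$ with $q\to_{\bar u}q''$ and $q''\to_{\bar u}q$ there is an injective homomorphism $q'\to_{\bar u}q''$; (3) $q'=\mathrm{ext}(q')$. A count-distinct query $q(\bar x,\mathrm{cntd}(y))\,{:}{-}\,A(\bar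 x,y,\bar z)\wedge C(\bar x,y,\bar z)$ ($y\notin\bar x$) returns on $I$, for each tuple $\bar d$ in the answer of the CQC $q(\bar x)\,{:}{-}\,A\wedge C$, the pair $(\bar d,k)$ with $k$ the number of distinct values $\theta(y)$ over all assignments $\theta$ with $\theta(A)\subseteq I$, $\theta$ satisfying $C$, and $\theta(\bar x)=\bar d$; two such queries are equivalent if they give the same output on all instances. $\mathrm{core}(q)$ is the core of the CQC $q(\bar x,y)\,{:}{-}\,A\wedge C$, read as a count-distinct query on $y$. *)

theory Defs
  imports Main "HOL-Library.Extended_Nat"
begin

datatype ('v, 'd) trm = Var 'v | Cst 'd

datatype cop = CEq | CLt | CLe

type_synonym ('v, 'd) cmp = "('v, 'd) trm \<times> cop \<times> ('v, 'd) trm"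
type_synonym ('r, 'v, 'd) atom = "'r \<times> ('v, 'd) trm list"
type_synonym ('r, 'd) fact = "'r \<times> 'd list"

record ('r, 'v, 'd) cqc =
  head  :: "'v list"
  atoms :: "('r, 'v, 'd) atom set"
  comps :: "('v, 'd) cmp set"

definition is_cqc :: "('r, 'v, 'd) cqc \<Rightarrow> bool" where
  "is_cqc q \<longleftrightarrow> finite (atoms q) \<and> finite (comps q)"

fun eval :: "('v \<Rightarrow> 'd) \<Rightarrow> ('v, 'd) trm \<Rightarrow> 'd" where
  "eval \<theta> (Var v) = \<theta> v"
| "eval \<theta> (Cst c) = c"

fun sat_cop :: "cop \<Rightarrow> 'd::linorder \<Rightarrow> 'd \<Rightarrow> bool" where
  "sat_cop CEq a b = (a = b)"
| "sat_cop CLt a b = (a < b)"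
| "sat_cop CLe a b = (a \<le> b)"

fun sat_cmp :: "('v \<Rightarrow> 'd::linorder) \<Rightarrow> ('v, 'd) cmp \<Rightarrow> bool" where
  "sat_cmp \<theta> (r, \<rho>, s) = sat_cop \<rho> (eval \<theta> r) (eval \<theta> s)"

definition entails :: "('v, 'd::linorder) cmp set \<Rightarrow> ('v, 'd) cmp \<Rightarrow> bool" where
  "entails C c \<longleftrightarrow> (\<forall>\<theta> :: 'v \<Rightarrow> 'd. (\<forall>c'\<in>C. sat_cmp \<theta> c') \<longrightarrow> sat_cmp \<theta> c)"

fun subst :: "('v \<Rightarrow> ('w, 'd) trm) \<Rightarrow> ('v, 'd) trm \<Rightarrow> ('w, 'd) trm" where
  "subst g (Var v) = g v"
| "subst g (Cst c) = Cst c"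

fun subst_atom :: "('v \<Rightarrow> ('w, 'd) trm) \<Rightarrow> ('r, 'v, 'd) atom \<Rightarrow> ('r, 'w, 'd) atom" where
  "subst_atom g (R, ts) = (R, map (subst g) ts)"

fun subst_cmp :: "('v \<Rightarrow> ('w, 'd) trm) \<Rightarrow> ('v, 'd) cmp \<Rightarrow> ('w, 'd) cmp" where
  "subst_cmp g (r, \<rho>, s) = (subst g r, \<rho>, subst g s)"

definition terms :: "('r, 'v, 'd) cqc \<Rightarrow> ('v, 'd) trm set" where
  "terms q = (\<Union>(R, ts)\<in>atoms q. set ts) \<union> (\<Union>(r, \<rho>, s)\<in>comps q. {r, s})
             \<union> Var ` set (head q)"

definition vars :: "('r, 'v, 'd) cqc \<Rightarrow> 'v set" where
  "vars q = {v. Var v \<in> terms q}"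

definition hom :: "('v \<Rightarrow> ('v, 'd) trm) \<Rightarrow> ('r, 'v, 'd::linorder) cqc \<Rightarrow> ('r, 'v, 'd) cqc \<Rightarrow> bool" where
  "hom g q1 q2 \<longleftrightarrow> head q1 = head q2
     \<and> (\<forall>u\<in>set (head q1). g u = Var u)
     \<and> subst_atom g ` atoms q1 \<subseteq> atoms q2
     \<and> (\<forall>c\<in>comps q1. entails (comps q2) (subst_cmp g c))"

definition has_hom :: "('r, 'v, 'd::linorder) cqc \<Rightarrow> ('r, 'v, 'd) cqc \<Rightarrow> bool" where
  "has_hom q1 q2 \<longleftrightarrow> (\<exists>g. hom g q1 q2)"

definition has_inj_hom :: "('r, 'v, 'd::linorder) cqc \<Rightarrow> ('r, 'v, 'd) cqc \<Rightarrow> bool" where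
  "has_inj_hom q1 q2 \<longleftrightarrow> (\<exists>g. hom g q1 q2 \<and> inj_on (subst g) (terms q1))"

definition iso :: "('v \<Rightarrow> 'v) \<Rightarrow> ('r, 'v, 'd) cqc \<Rightarrow> ('r, 'v, 'd) cqc \<Rightarrow> bool" where
  "iso f q1 q2 \<longleftrightarrow> head q1 = head q2
     \<and> bij_betw f (vars q1) (vars q2)
     \<and> (\<forall>u\<in>set (head q1). f u = u)
     \<and> subst_atom (Var \<circ> f) ` atoms q1 = atoms q2
     \<and> subst_cmp (Var \<circ> f) ` comps q1 = comps q2"

definition ext :: "('r, 'v, 'd::linorder) cqc \<Rightarrow> ('r, 'v, 'd) cqc" where
  "ext q = q\<lparr>comps := {(r, \<rho>, s). r \<in> terms q \<and> s \<in> terms q \<and> entails (comps q) (r, \<rho>, s)}\<rparr>"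

definition is_core :: "('r, 'v, 'd::linorder) cqc \<Rightarrow> ('r, 'v, 'd) cqc \<Rightarrow> bool" where
  "is_core q q' \<longleftrightarrow> is_cqc q'
     \<and> has_hom q q'
     \<and> (\<forall>q''. is_cqc q'' \<and> has_hom q q'' \<and> has_hom q'' q \<longrightarrow> has_inj_hom q' q'')
     \<and> q' = ext q'"

record ('r, 'v, 'd) cdq =
  cd_head  :: "'v list"
  cd_var   :: "'v"
  cd_atoms :: "('r, 'v, 'd) atom set"
  cd_comps :: "('v, 'd) cmp set"

definition is_cdq :: "('r, 'v, 'd) cdq \<Rightarrow> bool" where
  "is_cdq q \<longleftrightarrow> finite (cd_atoms q) \<and> finite (cd_comps q) \<and> cd_var q \<notin> set (cd_head q)"

(* the CQC q(xs, y) :- A /\ C whose core is core(q) *)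
definition cdq_cqc :: "('r, 'v, 'd) cdq \<Rightarrow> ('r, 'v, 'd) cqc" where
  "cdq_cqc q = \<lparr>head = cd_head q @ [cd_var q], atoms = cd_atoms q, comps = cd_comps q\<rparr>"

definition body_sat ::
  "('r, 'd) fact set \<Rightarrow> ('v \<Rightarrow> 'd::linorder) \<Rightarrow> ('r, 'v, 'd) atom set \<Rightarrow> ('v, 'd) cmp set \<Rightarrow> bool" where
  "body_sat I \<theta> A C \<longleftrightarrow> (\<lambda>(R, ts). (R, map (eval \<theta>) ts)) ` A \<subseteq> I \<and> (\<forall>c\<in>C. sat_cmp \<theta> c)"

definition ecard :: "'a set \<Rightarrow> enat" where
  "ecard S = (if finite S then enat (card S) else \<infinity>)"

definition cd_output :: "('r, 'v, 'd::linorder) cdq \<Rightarrow> ('r, 'd) fact set \<Rightarrow> ('d list \<times> enat) set" where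
  "cd_output q I =
     {(ds, ecard {\<theta> (cd_var q) | \<theta>. body_sat I \<theta> (cd_atoms q) (cd_comps q) \<and> map \<theta> (cd_head q) = ds})
      | ds. \<exists>\<theta>. body_sat I \<theta> (cd_atoms q) (cd_comps q) \<and> map \<theta> (cd_head q) = ds}"

definition cd_equiv :: "('r, 'v, 'd::linorder) cdq \<Rightarrow> ('r, 'v, 'd) cdq \<Rightarrow> bool" where
  "cd_equiv q1 q2 \<longleftrightarrow> (\<forall>I :: ('r, 'd) fact set. finite I \<longrightarrow> cd_output q1 I = cd_output q2 I)"

end

theory Submission
  imports Defs
begin

lemma subst_Var_id[simp]: "subst Var t = t"
  by (cases t) auto

lemma subst_atom_Var_id[simp]: "subst_atom Var a = a"
  by (cases a) (auto simp: map_idI)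

lemma subst_cmp_Var_id[simp]: "subst_cmp Var c = c"
  by (cases c) auto

lemma entails_mem: "c \<in> C \<Longrightarrow> entails C c"
  by (auto simp: entails_def)

lemma eval_subst: "eval \<theta> (subst g t) = eval (\<lambda>v. eval \<theta> (g v)) t"
  by (cases t) auto

lemma sat_cmp_subst: "sat_cmp \<theta> (subst_cmp g c) = sat_cmp (\<lambda>v. eval \<theta> (g v)) c"
  by (cases c) (auto simp: eval_subst)

definition Ans :: "('r, 'd) fact set \<Rightarrow> ('r, 'v, 'd::linorder) cqc \<Rightarrow> 'd list set" where
  "Ans I q = {map \<theta> (head q) | \<theta>. body_sat I \<theta> (atoms q) (comps q)}"

lemma hom_Ans: assumes "hom g q1 q2" shows "Ans I q2 \<subseteq> Ans I q1"
proof
  fix ds assume "ds \<in> Ans I q2"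
  then obtain \<theta> where ds: "ds = map \<theta> (head q2)" and b: "body_sat I \<theta> (atoms q2) (comps q2)"
    by (auto simp: Ans_def)
  define \<theta>' where "\<theta>' = (\<lambda>v. eval \<theta> (g v))"
  have "map \<theta>' (head q1) = ds" using assms ds by (auto simp: hom_def \<theta>'_def)
  moreover have "body_sat I \<theta>' (atoms q1) (comps q1)"
    unfolding body_sat_def
  proof
    show "(\<lambda>(R, ts). (R, map (eval \<theta>') ts)) ` atoms q1 \<subseteq> I"
    proof
      fix x assume "x \<in> (\<lambda>(R, ts). (R, map (eval \<theta>') ts)) ` atoms q1"
      then obtain R ts where a: "(R,ts) \<in> atoms q1" and x: "x = (R, map (eval \<theta>') ts)" by auto
      have "(R, map (subst g) ts) \<in> atoms q2" using assms a by (force simp: hom_def)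
      hence "(R, map (eval \<theta>) (map (subst g) ts)) \<in> I" using b by (force simp: body_sat_def)
      thus "x \<in> I" using x by (simp add: eval_subst \<theta>'_def comp_def)
    qed
    show "\<forall>c\<in>comps q1. sat_cmp \<theta>' c"
    proof
      fix c assume "c \<in> comps q1"
      hence "entails (comps q2) (subst_cmp g c)" using assms by (auto simp: hom_def)
      hence "sat_cmp \<theta> (subst_cmp g c)" using b by (auto simp: entails_def body_sat_def)
      thus "sat_cmp \<theta>' c" by (simp add: sat_cmp_subst \<theta>'_def)
    qed
  qed
  ultimately show "ds \<in> Ans I q1" by (auto simp: Ans_def)
qed

lemma core_equiv:
  assumes "is_cqc q" "is_core q c"
  shows "Ans I q = Ans I c"
proof -
  obtain g where g: "hom g q c" using assms by (auto simp: is_core_def has_hom_def)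
  have "hom Var q q" by (auto simp: hom_def entails_mem)
  hence "has_inj_hom c q" using assms by (auto simp: is_core_def has_hom_def)
  then obtain h where h: "hom h c q" by (auto simp: has_inj_hom_def)
  show ?thesis using hom_Ans[OF g] hom_Ans[OF h] by auto
qed

lemma subst_comp: "subst g (subst h t) = subst (\<lambda>v. subst g (h v)) t"
  by (cases t) auto

lemma subst_cong_id: "(\<And>v. t = Var v \<Longrightarrow> h v = Var v) \<Longrightarrow> subst h t = t"
  by (cases t) auto

lemma iso_hom:
  assumes "iso f c1 c2"
  shows "hom (Var \<circ> f) c1 c2"
  unfolding hom_def
proof (intro conjI ballI)
  fix c assume "c \<in> comps c1"
  hence "subst_cmp (Var \<circ> f) c \<in> comps c2" using assms by (auto simp: iso_def)
  thus "entails (comps c2) (subst_cmp (Var \<circ> f) c)" by (rule entails_mem)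
qed (use assms in \<open>auto simp: iso_def\<close>)

lemma iso_hom_back:
  assumes "iso f c1 c2"
  shows "hom (Var \<circ> inv_into (vars c1) f) c2 c1"
proof -
  let ?g = "Var \<circ> inv_into (vars c1) f"
  have bij: "bij_betw f (vars c1) (vars c2)" and hd: "head c1 = head c2"
    and fx: "\<forall>u\<in>set (head c1). f u = u"
    and at: "subst_atom (Var \<circ> f) ` atoms c1 = atoms c2"
    and cm: "subst_cmp (Var \<circ> f) ` comps c1 = comps c2" using assms by (auto simp: iso_def)
  have inj: "inj_on f (vars c1)" using bij by (auto simp: bij_betw_def)
  have key: "\<And>t. t \<in> terms c1 \<Longrightarrow> subst ?g (subst (Var \<circ> f) t) = t"
  proof -
    fix t assume t: "t \<in> terms c1"
    show "subst ?g (subst (Var \<circ> f) t) = t"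
      unfolding subst_comp
      apply (rule subst_cong_id)
      using t inj by (auto simp: vars_def)
  qed
  have headv: "\<And>u. u \<in> set (head c1) \<Longrightarrow> u \<in> vars c1" by (auto simp: vars_def terms_def)
  show ?thesis unfolding hom_def
  proof (intro conjI ballI)
    show "head c2 = head c1" using hd by simp
  next
    fix u assume "u \<in> set (head c2)"
    hence u: "u \<in> set (head c1)" using hd by simp
    hence "inv_into (vars c1) f (f u) = u" using inj headv by auto
    thus "?g u = Var u" using fx u by auto
  next
    show "subst_atom ?g ` atoms c2 \<subseteq> atoms c1"
    proof
      fix x assume "x \<in> subst_atom ?g ` atoms c2"
      then obtain y where y: "y \<in> atoms c2" and x: "x = subst_atom ?g y" by auto
      then obtain a where a0: "a \<in> atoms c1" and ya: "y = subst_atom (Var \<circ> f) a"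
        using at by blast
      obtain R ts where Rts: "a = (R, ts)" by fastforce
      have a: "(R, ts) \<in> atoms c1" using a0 Rts by simp
      have x: "x = subst_atom ?g (subst_atom (Var \<circ> f) (R, ts))" using x ya Rts by simp
      have "\<forall>t\<in>set ts. t \<in> terms c1" using a by (force simp: terms_def)
      hence "map (subst ?g) (map (subst (Var \<circ> f)) ts) = ts"
        using key by (induct ts) auto
      thus "x \<in> atoms c1" using x a by simp
    qed
  next
    fix c assume "c \<in> comps c2"
    then obtain c0 where c0: "c0 \<in> comps c1" and cc0: "c = subst_cmp (Var \<circ> f) c0"
      using cm by blast
    obtain r \<rho> s where rs: "c0 = (r, \<rho>, s)" by (cases c0) auto
    have c1: "(r, \<rho>, s) \<in> comps c1" using c0 rs by simp
    have c: "c = subst_cmp (Var \<circ> f) (r, \<rho>, s)" using cc0 rs by simp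
    have "r \<in> terms c1" "s \<in> terms c1" using c1 by (force simp: terms_def)+
    hence "subst_cmp ?g c = (r, \<rho>, s)" using c key by simp
    thus "entails (comps c1) (subst_cmp ?g c)" using c1 entails_mem by metis
  qed
qed

definition F :: "'d list set \<Rightarrow> ('d list \<times> enat) set" where
  "F S = {(ds, ecard {d. ds @ [d] \<in> S}) | ds. \<exists>d. ds @ [d] \<in> S}"

lemma output_F: "cd_output q I = F (Ans I (cdq_cqc q))"
proof -
  have A: "Ans I (cdq_cqc q) = {map \<theta> (cd_head q) @ [\<theta> (cd_var q)] | \<theta>.
            body_sat I \<theta> (cd_atoms q) (cd_comps q)}"
    by (simp add: Ans_def cdq_cqc_def)
  have S: "\<And>ds. {\<theta> (cd_var q) | \<theta>. body_sat I \<theta> (cd_atoms q) (cd_comps q) \<and> map \<theta> (cd_head q) = ds}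
      = {d. ds @ [d] \<in> Ans I (cdq_cqc q)}"
    unfolding A by auto
  have E: "\<And>ds. (\<exists>\<theta>. body_sat I \<theta> (cd_atoms q) (cd_comps q) \<and> map \<theta> (cd_head q) = ds)
      = (\<exists>d. ds @ [d] \<in> Ans I (cdq_cqc q))"
    unfolding A by auto
  show ?thesis unfolding cd_output_def F_def S E ..
qed

theorem mainTheorem6:
  fixes q1 q2 :: "('r, 'v, 'd::dense_linorder) cdq"
    and c1 c2 :: "('r, 'v, 'd) cqc"
    and f :: "'v \<Rightarrow> 'v"
  assumes "is_cdq q1" and "is_cdq q2"
    and "cd_head q1 = cd_head q2" and "cd_var q1 = cd_var q2"
    and "is_core (cdq_cqc q1) c1" and "is_core (cdq_cqc q2) c2"
    and "iso f c1 c2"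
  shows "cd_equiv q1 q2"
proof -
  have q1: "is_cqc (cdq_cqc q1)" using assms(1) by (auto simp: is_cdq_def is_cqc_def cdq_cqc_def)
  have q2: "is_cqc (cdq_cqc q2)" using assms(2) by (auto simp: is_cdq_def is_cqc_def cdq_cqc_def)
  have "\<And>I. Ans I (cdq_cqc q1) = Ans I (cdq_cqc q2)"
  proof -
    fix I
    have "Ans I c1 = Ans I c2"
      using hom_Ans[OF iso_hom[OF assms(7)]] hom_Ans[OF iso_hom_back[OF assms(7)]] by auto
    thus "Ans I (cdq_cqc q1) = Ans I (cdq_cqc q2)"
      using core_equiv[OF q1 assms(5)] core_equiv[OF q2 assms(6)] by simp
  qed
  thus ?thesis by (simp add: cd_equiv_def output_F)
qed

end
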